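(* Let $D\ge2$ and $k\ge2$. There exist constants $c,C_k>0$ depending only on $D$ and $k$ such that: let $0<\varepsilon<c$ and $E\subset\mathbb R^D$ with $2\leq\mathrm{card}(E)\leq k$. Then there exist $\tau$ with $\exp(-C_k/\varepsilon)\mathrm{diam}(E)\leq\tau\leq\exp(-1/\varepsilon)\mathrm{diam}(E)$ and a partition of $E$ into subsets $E_\nu$ ($\nu=1,\dots,\nu_{\max}$) such that $\mathrm{card}(E_\nu)\leq k-1$ for all $\nu$, $\mathrm{diam}(E_\nu)\leq\exp(-5/\varepsilon)\tau$ for all $\nu$, and $\mathrm{dist}(E_\nu,E_{\nu'})\geq\tau$ for all $\nu\neq\nu'$. *)

theory Defs
  imports "HOL-Analysis.Analysis"
begin

definition is_partition_of :: "'a set set \<Rightarrow> 'a set \<Rightarrow> bool" where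
  "is_partition_of P E \<longleftrightarrow> \<Union>P = E \<and> (\<forall>F\<in>P. F \<noteq> {}) \<and>
     (\<forall>F\<in>P. \<forall>G\<in>P. F \<noteq> G \<longrightarrow> F \<inter> G = {})"

end

theory Submission
  imports Defs
begin

lemma gap_pigeon:
  fixes S :: "real set" and t :: "nat \<Rightarrow> real"
  assumes fin: "finite S" and cS: "card S \<le> K" and dec: "\<And>j. t (Suc j) < t j"
  shows "\<exists>j\<le>K. \<forall>s\<in>S. \<not> (t (Suc j) \<le> s \<and> s < t j)"
proof (rule ccontr)
  assume "\<not> ?thesis"
  hence ex: "\<forall>j\<in>{..K}. \<exists>s. s \<in> S \<and> t (Suc j) \<le> s \<and> s < t j" by auto
  define f where "f j = (SOME s. s \<in> S \<and> t (Suc j) \<le> s \<and> s < t j)" for j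
  have fP: "f j \<in> S \<and> t (Suc j) \<le> f j \<and> f j < t j" if "j \<in> {..K}" for j
    unfolding f_def using someI_ex[OF ex[rule_format, OF that]] .
  have D: "decseq t" by (rule decseq_SucI) (simp add: dec less_imp_le)
  have lt: "\<not> (f i = f j)" if "i \<in> {..K}" "j \<in> {..K}" "i < j" for i j
  proof -
    have "t j \<le> t (Suc i)" using decseqD[OF D, of "Suc i" j] that by simp
    thus ?thesis using fP[OF that(1)] fP[OF that(2)] by auto
  qed
  have "inj_on f {..K}"
    unfolding inj_on_def
    by (metis lt linorder_neqE_nat)
  moreover have "f ` {..K} \<subseteq> S" using fP by auto
  ultimately have "card {..K} \<le> card S" using card_inj_on_le fin by blast
  thus False using cS by simp
qed

theorem lemma2p2:
  assumes "DIM('a::euclidean_space) \<ge> 2"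
  shows "\<forall>k::nat. k \<ge> 2 \<longrightarrow>
    (\<exists>c::real. \<exists>Ck::real. c > 0 \<and> Ck > 0 \<and>
      (\<forall>(\<epsilon>::real) (E::'a set).
         0 < \<epsilon> \<and> \<epsilon> < c \<and> finite E \<and> 2 \<le> card E \<and> card E \<le> k \<longrightarrow>
         (\<exists>(\<tau>::real) (P::'a set set).
            exp (- Ck / \<epsilon>) * diameter E \<le> \<tau> \<and> \<tau> \<le> exp (- 1 / \<epsilon>) * diameter E \<and>
            is_partition_of P E \<and>
            (\<forall>F\<in>P. card F \<le> k - 1) \<and>
            (\<forall>F\<in>P. diameter F \<le> exp (- 5 / \<epsilon>) * \<tau>) \<and>
            (\<forall>F\<in>P. \<forall>G\<in>P. F \<noteq> G \<longrightarrow> setdist F G \<ge> \<tau>))))"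
proof (intro allI impI)
  fix k :: nat assume k2: "k \<ge> 2"
  show "\<exists>c::real. \<exists>Ck::real. c > 0 \<and> Ck > 0 \<and>
      (\<forall>(\<epsilon>::real) (E::'a set).
         0 < \<epsilon> \<and> \<epsilon> < c \<and> finite E \<and> 2 \<le> card E \<and> card E \<le> k \<longrightarrow>
         (\<exists>(\<tau>::real) (P::'a set set).
            exp (- Ck / \<epsilon>) * diameter E \<le> \<tau> \<and> \<tau> \<le> exp (- 1 / \<epsilon>) * diameter E \<and>
            is_partition_of P E \<and>
            (\<forall>F\<in>P. card F \<le> k - 1) \<and>
            (\<forall>F\<in>P. diameter F \<le> exp (- 5 / \<epsilon>) * \<tau>) \<and>
            (\<forall>F\<in>P. \<forall>G\<in>P. F \<noteq> G \<longrightarrow> setdist F G \<ge> \<tau>)))"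
  proof (rule exI[of _ 1], rule exI[of _ "1 + 6 * real (k^2)"], intro conjI allI impI)
    show "(1::real) > 0" by simp
    show "1 + 6 * real (k^2) > 0" by (simp add: add_pos_nonneg)
    fix \<epsilon> :: real and E :: "'a set"
    assume A: "0 < \<epsilon> \<and> \<epsilon> < 1 \<and> finite E \<and> 2 \<le> card E \<and> card E \<le> k"
    hence ep: "0 < \<epsilon>" "\<epsilon> < 1" and fin: "finite E" and cE: "2 \<le> card E" "card E \<le> k" by auto
    define d where "d = diameter E"
    have bE: "bounded E" using fin by (simp add: finite_imp_bounded)
    have "E \<noteq> {}" using cE by auto
    then obtain a b where ab: "a \<in> E" "b \<in> E" "dist a b = d"
      using diameter_compact_attained[of E] fin finite_imp_compact d_def by blast
    obtain x y where xy: "x \<in> E" "y \<in> E" "x \<noteq> y"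
    proof -
      from cE have "1 < card E" by simp
      then show ?thesis using that card_le_Suc0_iff_eq[OF fin] by (metis One_nat_def not_le)
    qed
    have dpos: "d > 0"
      using diameter_bounded_bound[OF bE xy(1,2)] xy(3) d_def
      by (metis dist_pos_lt order_less_le_trans)
    define t where "t j = exp (- (1 + 6 * real j) / \<epsilon>) * d" for j :: nat
    have tpos: "t j > 0" for j unfolding t_def using dpos by simp
    have tsuc: "t (Suc j) = exp (- 6 / \<epsilon>) * t j" for j
    proof -
      have "- (1 + 6 * real (Suc j)) / \<epsilon> = - 6 / \<epsilon> + - (1 + 6 * real j) / \<epsilon>"
        using ep by (simp add: field_simps)
      thus ?thesis unfolding t_def by (simp only: exp_add mult.assoc)
    qed
    have e6: "exp (6 / \<epsilon>) > 2"
    proof -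
      have "6 / \<epsilon> > 6" using ep by (simp add: field_simps)
      moreover have "exp (6/\<epsilon>) \<ge> 1 + 6/\<epsilon>" by (rule exp_ge_add_one_self)
      ultimately show ?thesis by linarith
    qed
    have em6: "2 * exp (- 6 / \<epsilon>) < 1"
    proof -
      have "2 * exp (- 6 / \<epsilon>) < exp (6/\<epsilon>) * exp (- 6 / \<epsilon>)"
        by (rule mult_strict_right_mono[OF e6]) simp
      also have "\<dots> = 1" by (simp add: exp_add[symmetric])
      finally show ?thesis .
    qed
    have e1: "exp (- 6 / \<epsilon>) < 1" using em6 exp_gt_zero[of "- 6 / \<epsilon>"] by linarith
    have dec: "t (Suc j) < t j" for j
      unfolding tsuc using mult_strict_right_mono[OF e1 tpos[of j]] by simp
    define S where "S = (\<lambda>(p, q). dist p q) ` (E \<times> E)"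
    have finS: "finite S" unfolding S_def using fin by simp
    have cS: "card S \<le> k^2"
    proof -
      have "card S \<le> card (E \<times> E)" unfolding S_def using fin using card_image_le[of "E \<times> E" "\<lambda>(p, q). dist p q"] by simp
      also have "\<dots> = card E ^ 2" using fin by (simp add: card_cartesian_product power2_eq_square)
      also have "\<dots> \<le> k^2" using cE by (simp add: power_mono)
      finally show ?thesis .
    qed
    obtain j where jK: "j \<le> k^2" and gapS: "\<forall>s\<in>S. \<not> (t (Suc j) \<le> s \<and> s < t j)"
      using gap_pigeon[of S "k^2" t, OF finS cS dec] by blast
    define \<tau> where "\<tau> = t j"
    define \<tau>' where "\<tau>' = t (Suc j)"
    have gap: "dist p q < \<tau>'" if "p \<in> E" "q \<in> E" "dist p q < \<tau>" for p q
    proof -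
      have "dist p q \<in> S" unfolding S_def using that by force
      thus ?thesis using gapS that unfolding \<tau>_def \<tau>'_def by force
    qed
    have tt: "2 * \<tau>' < \<tau>" unfolding \<tau>_def \<tau>'_def tsuc using em6 tpos[of j]
      using mult_strict_right_mono[OF em6 tpos[of j]] by (simp add: mult.assoc)
    have taupos: "\<tau> > 0" "\<tau>' > 0" unfolding \<tau>_def \<tau>'_def using tpos by auto
    have trans: "dist p r < \<tau>" if "p \<in> E" "q \<in> E" "r \<in> E" "dist p q < \<tau>" "dist q r < \<tau>" for p q r
    proof -
      have "dist p r \<le> dist p q + dist q r" by (rule dist_triangle)
      also have "\<dots> < 2 * \<tau>'" using gap[of p q] gap[of q r] that by linarith
      finally show ?thesis using tt by linarith
    qed
    define B where "B p = {q \<in> E. dist p q < \<tau>}" for p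
    define P where "P = B ` E"
    have Beq: "B p = B q" if "p \<in> E" "q \<in> E" "dist p q < \<tau>" for p q
    proof -
      have "dist q p < \<tau>" using that by (simp add: dist_commute)
      thus ?thesis unfolding B_def using trans that by blast
    qed
    have mem: "p \<in> B p" if "p \<in> E" for p using that taupos unfolding B_def by simp
    have h1: "exp (- (1 + 6 * real (k^2)) / \<epsilon>) * diameter E \<le> \<tau>"
    proof -
      have X: "- (1 + 6 * real (k^2)) \<le> - (1 + 6 * real j)" using jK by simp
      have "- (1 + 6 * real (k^2)) / \<epsilon> \<le> - (1 + 6 * real j) / \<epsilon>"
        using divide_right_mono[OF X, of \<epsilon>] ep by simp
      thus ?thesis unfolding \<tau>_def t_def d_def[symmetric] using dpos by simp
    qed
    have h2: "\<tau> \<le> exp (- 1 / \<epsilon>) * diameter E"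
    proof -
      have X: "- (1 + 6 * real j) \<le> - 1" by simp
      have "- (1 + 6 * real j) / \<epsilon> \<le> - 1 / \<epsilon>"
        using divide_right_mono[OF X, of \<epsilon>] ep by simp
      thus ?thesis unfolding \<tau>_def t_def d_def[symmetric] using dpos by simp
    qed
    have tau_lt_d: "\<tau> < d"
    proof -
      have "- (1 + 6 * real j) / \<epsilon> < 0" using ep by (simp add: divide_neg_pos)
      hence "exp (- (1 + 6 * real j) / \<epsilon>) < 1" by simp
      thus ?thesis unfolding \<tau>_def t_def using dpos by simp
    qed
    have h3: "is_partition_of P E"
      unfolding is_partition_of_def P_def
    proof (intro conjI ballI impI)
      show "\<Union> (B ` E) = E" using mem unfolding B_def by blast
    next
      fix F assume "F \<in> B ` E" thus "F \<noteq> {}" using mem by blast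
    next
      fix F G assume FG: "F \<in> B ` E" "G \<in> B ` E" "F \<noteq> G"
      then obtain p q where pq: "p \<in> E" "q \<in> E" "F = B p" "G = B q" by blast
      show "F \<inter> G = {}"
      proof (rule ccontr)
        assume "F \<inter> G \<noteq> {}"
        then obtain r where r: "r \<in> B p" "r \<in> B q" using pq by blast
        hence "r \<in> E" "dist p r < \<tau>" "dist q r < \<tau>" unfolding B_def by auto
        hence "B p = B r" "B q = B r" using Beq pq by auto
        thus False using FG pq by simp
      qed
    qed
    have h4: "\<forall>F\<in>P. card F \<le> k - 1"
    proof
      fix F assume "F \<in> P"
      then obtain p where p: "p \<in> E" "F = B p" unfolding P_def by blast
      have sub: "F \<subseteq> E" unfolding p B_def by auto
      have "F \<noteq> E"
      proof
        assume "F = E"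
        hence "dist p a < \<tau>" "dist p b < \<tau>" using ab unfolding p B_def by auto
        hence "dist a b < \<tau>" using trans[of a p b] ab p by (simp add: dist_commute)
        thus False using ab tau_lt_d by simp
      qed
      hence "card F < card E" using sub fin by (simp add: psubset_card_mono)
      thus "card F \<le> k - 1" using cE by simp
    qed
    have h5: "\<forall>F\<in>P. diameter F \<le> exp (- 5 / \<epsilon>) * \<tau>"
    proof
      fix F assume "F \<in> P"
      then obtain p where p: "p \<in> E" "F = B p" unfolding P_def by blast
      have "diameter F \<le> \<tau>'"
      proof (rule diameter_le)
        show "F \<noteq> {} \<or> 0 \<le> \<tau>'" using taupos by simp
        fix q r assume "q \<in> F" "r \<in> F"
        hence "q \<in> E" "r \<in> E" "dist p q < \<tau>" "dist p r < \<tau>" unfolding p B_def by auto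
        hence "dist q r < \<tau>" using trans[of q p r] p by (simp add: dist_commute)
        hence "dist q r < \<tau>'" using gap \<open>q \<in> E\<close> \<open>r \<in> E\<close> by blast
        thus "norm (q - r) \<le> \<tau>'" by (simp add: dist_norm)
      qed
      also have "\<tau>' \<le> exp (- 5 / \<epsilon>) * \<tau>"
        unfolding \<tau>'_def \<tau>_def tsuc using tpos[of j] ep
        by (simp add: divide_right_mono)
      finally show "diameter F \<le> exp (- 5 / \<epsilon>) * \<tau>" .
    qed
    have h6: "\<forall>F\<in>P. \<forall>G\<in>P. F \<noteq> G \<longrightarrow> setdist F G \<ge> \<tau>"
    proof (intro ballI impI)
      fix F G assume FG: "F \<in> P" "G \<in> P" "F \<noteq> G"
      then obtain p q where pq: "p \<in> E" "q \<in> E" "F = B p" "G = B q" unfolding P_def by blast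
      show "\<tau> \<le> setdist F G"
      proof (rule le_setdistI)
        show "F \<noteq> {}" "G \<noteq> {}" using mem pq by auto
        fix u v assume uv: "u \<in> F" "v \<in> G"
        show "\<tau> \<le> dist u v"
        proof (rule ccontr)
          assume "\<not> \<tau> \<le> dist u v"
          hence "dist u v < \<tau>" by simp
          moreover have "u \<in> E" "v \<in> E" "dist p u < \<tau>" "dist q v < \<tau>" using uv unfolding pq B_def by auto
          ultimately have "B p = B u" "B u = B v" "B q = B v" using Beq pq by auto
          thus False using FG pq by simp
        qed
      qed
    qed
    show "\<exists>(\<tau>::real) (P::'a set set).
            exp (- (1 + 6 * real (k^2)) / \<epsilon>) * diameter E \<le> \<tau> \<and> \<tau> \<le> exp (- 1 / \<epsilon>) * diameter E \<and>
            is_partition_of P E \<and>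
            (\<forall>F\<in>P. card F \<le> k - 1) \<and>
            (\<forall>F\<in>P. diameter F \<le> exp (- 5 / \<epsilon>) * \<tau>) \<and>
            (\<forall>F\<in>P. \<forall>G\<in>P. F \<noteq> G \<longrightarrow> setdist F G \<ge> \<tau>)"
      using h1 h2 h3 h4 h5 h6 by blast
  qed
qed

end
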